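(* Let $d,n\ge 1$, let $\kappa\ge 1$ divide $d$, set $d'=d/\kappa$, let $r\ge 2$ and $\mathbf r=(r,\dots,r)\in\mathbb{N}^d$. Let $A_1,\dots,A_{d'}\in\mathbb{R}^{m\times n^\kappa}$ and let $\mathcal{A}(\mathcal{Y})=\mathcal{Y}\times_1A_1\times_2\cdots\times_{d'}A_{d'}$ for $\mathcal{Y}\in\mathbb{R}^{n^\kappa\times\cdots\times n^\kappa}$ ($d'$ modes). Suppose that each $A_i$ has the RIP$(\varepsilon,\mathcal{S}_{1,2})$ property, and let $\delta=4d'r^d\varepsilon$ with $\delta<1$. Then $\mathcal{A}\circ\mathcal{R}$ has the TRIP$(\delta,\mathbf r)$ property, i.e. $$(1-\delta)\|\mathcal{X}\|^2\le\|\mathcal{A}(\mathcal{R}(\mathcal{X}))\|^2\le(1+\delta)\|\mathcal{X}\|^2$$ for all $\mathcal{X}\in\mathbb{R}^{n\times\cdots\times n}$ ($d$ modes) with HOSVD rank at most $\mathbf r$.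
   Context: $\|\cdot\|$ denotes the Frobenius norm of a tensor. The $j$-mode product of $\mathcal{X}\in\mathbb{R}^{p_1\times\cdots\times p_D}$ with $U\in\mathbb{R}^{q\times p_j}$ is the tensor $\mathcal{X}\times_jU\in\mathbb{R}^{p_1\times\cdots\times q\times\cdots\times p_D}$ with entries $(\mathcal{X}\times_jU)_{i_1,\dots,\ell,\dots,i_D}=\sum_{i_j=1}^{p_j}\mathcal{X}_{i_1,\dots,i_j,\dots,i_D}U_{\ell,i_j}$. A $d$-mode tensor $\mathcal{X}\in\mathbb{R}^{n\times\cdots\times n}$ has HOSVD (multilinear) rank at most $(r,\dots,r)$ if there are subspaces $\mathcal{U}_1,\dots,\mathcal{U}_d\subset\mathbb{R}^n$ of dimension $r$ with $\mathcal{X}\in\mathcal{U}_1\otimes\cdots\otimes\mathcal{U}_d$. The reshaping operator $\mathcal{R}:\mathbb{R}^{n\times\cdots\times n}\ (d\text{ modes})\to\mathbb{R}^{n^\kappa\times\cdots\times n^\kappa}\ (d'\text{ modes})$ is the unique linear map with $\mathcal{R}(\mathbf{x}^1\circ\cdots\circ\mathbf{x}^d)=\bigcirc_{i=1}^{d'}\big(\mathbf{x}^{\kappa(i-1)+1}\otimes\cdots\otimes\mathbf{x}^{\kappa i}\big)$, where $\circ$ is the outer product and $\otimes$ the Kronecker product of vectors. Let $\mathcal{S}_1=\{\mathbf{u}^1\otimes\cdots\otimes\mathbf{u}^\kappa:\mathbf{u}^i\in\mathbb{S}^{n-1}\}\subset\mathbb{R}^{n^\kappa}$, $\mathcal{S}_2=\{(\mathbf{x}+\mathbf{y})/\|\mathbf{x}+\mathbf{y}\|_2:\mathbf{x},\mathbf{y}\in\mathcal{S}_1,\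 \langle\mathbf{x},\mathbf{y}\rangle=0\}$ and $\mathcal{S}_{1,2}=\mathcal{S}_1\cup\mathcal{S}_2$. A linear map $L$ has the RIP$(\varepsilon,\mathcal{S})$ property if $(1-\varepsilon)\|s\|^2\le\|L(s)\|^2\le(1+\varepsilon)\|s\|^2$ for all $s\in\mathcal{S}$. A linear map has the TRIP$(\delta,\mathbf r)$ property if $(1-\delta)\|\mathcal{X}\|^2\le\|\cdot(\mathcal{X})\|^2\le(1+\delta)\|\mathcal{X}\|^2$ for all $\mathcal{X}$ of HOSVD rank at most $\mathbf r$. *)

theory Defs
  imports "HOL-Analysis.Analysis"
begin

text \<open>A vector of R^N is a function nat => real vanishing outside {0..<N}.
 A tensor with mode sizes dims (a list) is a function nat list => real vanishing
 outside the index set tensor_idx dims.\<close>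

definition tensor_idx :: "nat list \<Rightarrow> nat list set" where
  "tensor_idx dims = {is. length is = length dims \<and> (\<forall>k<length dims. is ! k < dims ! k)}"

definition fro_sq :: "nat list \<Rightarrow> (nat list \<Rightarrow> real) \<Rightarrow> real" where
  "fro_sq dims X = (\<Sum>is\<in>tensor_idx dims. (X is)\<^sup>2)"

definition vec_norm_sq :: "nat \<Rightarrow> (nat \<Rightarrow> real) \<Rightarrow> real" where
  "vec_norm_sq N x = (\<Sum>i<N. (x i)\<^sup>2)"

definition vec_inner :: "nat \<Rightarrow> (nat \<Rightarrow> real) \<Rightarrow> (nat \<Rightarrow> real) \<Rightarrow> real" where
  "vec_inner N x y = (\<Sum>i<N. x i * y i)"

definition is_vec :: "nat \<Rightarrow> (nat \<Rightarrow> real) \<Rightarrow> bool" where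
  "is_vec N x \<longleftrightarrow> (\<forall>i\<ge>N. x i = 0)"

definition vec_span :: "('a \<Rightarrow> real) set \<Rightarrow> ('a \<Rightarrow> real) set" where
  "vec_span S = {v. \<exists>F c. finite F \<and> F \<subseteq> S \<and> v = (\<lambda>i. \<Sum>w\<in>F. c w * w i)}"

definition subspace_dim :: "nat \<Rightarrow> nat \<Rightarrow> (nat \<Rightarrow> real) set \<Rightarrow> bool" where
  "subspace_dim n r U \<longleftrightarrow>
     (\<exists>b :: nat \<Rightarrow> nat \<Rightarrow> real.
        (\<forall>j<r. is_vec n (b j)) \<and>
        (\<forall>c. (\<forall>i. (\<Sum>j<r. c j * b j i) = 0) \<longrightarrow> (\<forall>j<r. c j = 0)) \<and>
        U = vec_span (b ` {..<r}))"

definition outer :: "nat \<Rightarrow> nat \<Rightarrow> (nat \<Rightarrow> nat \<Rightarrow> real) \<Rightarrow> nat list \<Rightarrow> real" where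
  "outer n d xs = (\<lambda>is. if is \<in> tensor_idx (replicate d n) then (\<Prod>k<d. xs k (is ! k)) else 0)"

text \<open>HOSVD (multilinear) rank at most (r,...,r): X lies in U_1 (x) ... (x) U_d
 (the span of outer products of vectors from the U_k) for subspaces U_k of R^n of dimension r.\<close>
definition hosvd_rank_le :: "nat \<Rightarrow> nat \<Rightarrow> nat \<Rightarrow> (nat list \<Rightarrow> real) \<Rightarrow> bool" where
  "hosvd_rank_le n d r X \<longleftrightarrow>
     (\<exists>U :: nat \<Rightarrow> (nat \<Rightarrow> real) set.
        (\<forall>k<d. subspace_dim n r (U k)) \<and>
        X \<in> vec_span {outer n d xs | xs. \<forall>k<d. xs k \<in> U k})"

text \<open>j-mode product (0-based mode j) of a tensor with mode sizes dims with a
 q x (dims!j) matrix U (a function row => column => real).\<close>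
definition mode_prod :: "nat list \<Rightarrow> nat \<Rightarrow> nat \<Rightarrow> (nat \<Rightarrow> nat \<Rightarrow> real)
                          \<Rightarrow> (nat list \<Rightarrow> real) \<Rightarrow> nat list \<Rightarrow> real" where
  "mode_prod dims j q U X = (\<lambda>is. if is \<in> tensor_idx (dims[j := q])
        then (\<Sum>i<dims ! j. X (is[j := i]) * U (is ! j) i) else 0)"

text \<open>The map A(Y) = Y x_1 A_1 x_2 ... x_{d'} A_{d'} for a d'-mode tensor Y with all
 mode sizes N and m x N matrices As 0, ..., As (d'-1) (As j is A_{j+1}).\<close>
definition multi_mode :: "nat \<Rightarrow> nat \<Rightarrow> nat \<Rightarrow> (nat \<Rightarrow> nat \<Rightarrow> nat \<Rightarrow> real)
                          \<Rightarrow> (nat list \<Rightarrow> real) \<Rightarrow> nat list \<Rightarrow> real" where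
  "multi_mode d' m N As Y =
     fold (\<lambda>j Z. mode_prod (replicate j m @ replicate (d' - j) N) j m (As j) Z) [0..<d'] Y"

text \<open>Index j < n^kappa of the Kronecker product of kappa vectors of R^n corresponds to the
 base-n digits (most significant first): (x^1 (x) ... (x) x^kappa)_j = prod_l x^l_{digit l}.\<close>
definition kdigits :: "nat \<Rightarrow> nat \<Rightarrow> nat \<Rightarrow> nat list" where
  "kdigits n \<kappa> j = map (\<lambda>l. j div n ^ (\<kappa> - 1 - l) mod n) [0..<\<kappa>]"

definition kron :: "nat \<Rightarrow> nat \<Rightarrow> (nat \<Rightarrow> nat \<Rightarrow> real) \<Rightarrow> nat \<Rightarrow> real" where
  "kron n \<kappa> us = (\<lambda>j. if j < n ^ \<kappa> then (\<Prod>l<\<kappa>. us l (kdigits n \<kappa> j ! l)) else 0)"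

text \<open>Reshaping R: d modes of size n to d' = d div kappa modes of size n^kappa; it is the
 linear map sending x^1 o ... o x^d to the outer product of the kron's of consecutive groups
 of kappa vectors (with the above Kronecker convention).\<close>
definition reshape :: "nat \<Rightarrow> nat \<Rightarrow> nat \<Rightarrow> (nat list \<Rightarrow> real) \<Rightarrow> nat list \<Rightarrow> real" where
  "reshape n d \<kappa> X = (\<lambda>js. if js \<in> tensor_idx (replicate (d div \<kappa>) (n ^ \<kappa>))
        then X (concat (map (kdigits n \<kappa>) js)) else 0)"

definition S1 :: "nat \<Rightarrow> nat \<Rightarrow> (nat \<Rightarrow> real) set" where
  "S1 n \<kappa> = {kron n \<kappa> us | us. \<forall>l<\<kappa>. is_vec n (us l) \<and> vec_norm_sq n (us l) = 1}"

definition S2 :: "nat \<Rightarrow> nat \<Rightarrow> (nat \<Rightarrow> real) set" where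
  "S2 n \<kappa> = {(\<lambda>i. (x i + y i) / sqrt (vec_norm_sq (n ^ \<kappa>) (\<lambda>i. x i + y i))) | x y.
               x \<in> S1 n \<kappa> \<and> y \<in> S1 n \<kappa> \<and> vec_inner (n ^ \<kappa>) x y = 0}"

definition S12 :: "nat \<Rightarrow> nat \<Rightarrow> (nat \<Rightarrow> real) set" where
  "S12 n \<kappa> = S1 n \<kappa> \<union> S2 n \<kappa>"

definition mat_vec :: "nat \<Rightarrow> nat \<Rightarrow> (nat \<Rightarrow> nat \<Rightarrow> real) \<Rightarrow> (nat \<Rightarrow> real) \<Rightarrow> nat \<Rightarrow> real" where
  "mat_vec m N M s = (\<lambda>l. if l < m then (\<Sum>i<N. M l i * s i) else 0)"

definition RIP :: "nat \<Rightarrow> nat \<Rightarrow> (nat \<Rightarrow> nat \<Rightarrow> real) \<Rightarrow> real \<Rightarrow> (nat \<Rightarrow> real) set \<Rightarrow> bool" where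
  "RIP m N M \<epsilon> S \<longleftrightarrow> (\<forall>s\<in>S.
      (1 - \<epsilon>) * vec_norm_sq N s \<le> vec_norm_sq m (mat_vec m N M s) \<and>
      vec_norm_sq m (mat_vec m N M s) \<le> (1 + \<epsilon>) * vec_norm_sq N s)"

end

theory Submission
  imports Defs
begin


lemma tidx_Nil[simp]: "tensor_idx [] = {[]}"
  by (auto simp: tensor_idx_def)

lemma tidx_Cons: "tensor_idx (x#xs) = (\<lambda>(i,ix). i#ix) ` ({..<x} \<times> tensor_idx xs)"
proof (rule set_eqI, rule iffI)
  fix js assume a: "js \<in> tensor_idx (x#xs)"
  then obtain i ix where js: "js = i#ix"
    unfolding tensor_idx_def by (cases js) auto
  have "i < x" using a js unfolding tensor_idx_def by force
  moreover have "ix \<in> tensor_idx xs"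
    unfolding tensor_idx_def
  proof (intro CollectI conjI allI impI)
    show "length ix = length xs" using a js by (simp add: tensor_idx_def)
    fix k assume "k < length xs"
    then show "ix ! k < xs ! k" using a js unfolding tensor_idx_def
      by (metis (no_types, lifting) Suc_less_eq length_Cons mem_Collect_eq nth_Cons_Suc)
  qed
  ultimately show "js \<in> (\<lambda>(i,ix). i#ix) ` ({..<x} \<times> tensor_idx xs)" using js by force
next
  fix js assume "js \<in> (\<lambda>(i,ix). i#ix) ` ({..<x} \<times> tensor_idx xs)"
  then show "js \<in> tensor_idx (x#xs)"
    unfolding tensor_idx_def by (auto simp: nth_Cons split: nat.splits)
qed

lemma finite_tidx[simp]: "finite (tensor_idx dims)"
  by (induction dims) (auto simp: tidx_Cons)

lemma sum_tidx_Cons: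
  "(\<Sum>ix\<in>tensor_idx (x#xs). f ix) = (\<Sum>i<x. \<Sum>ix\<in>tensor_idx xs. f (i#ix))"
proof -
  have inj: "inj_on (\<lambda>(i,ix). i#ix) ({..<x} \<times> tensor_idx xs)"
    by (auto simp: inj_on_def)
  have "(\<Sum>ix\<in>tensor_idx (x#xs). f ix) = (\<Sum>p\<in>{..<x} \<times> tensor_idx xs. f (fst p # snd p))"
    unfolding tidx_Cons by (subst sum.reindex[OF inj]) (auto intro!: sum.cong)
  also have "\<dots> = (\<Sum>i<x. \<Sum>ix\<in>tensor_idx xs. f (i#ix))"
    by (simp add: sum.cartesian_product case_prod_beta)
  finally show ?thesis .
qed

lemma sum_tidx_append:
  "(\<Sum>ix\<in>tensor_idx (xs@ys). f ix) = (\<Sum>a\<in>tensor_idx xs. \<Sum>b\<in>tensor_idx ys. f (a@b))"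
proof (induction xs arbitrary: f)
  case Nil then show ?case by simp
next
  case (Cons x xs) then show ?case by (simp add: sum_tidx_Cons)
qed

lemma card_tidx: "card (tensor_idx dims) = prod_list dims"
proof (induction dims)
  case Nil then show ?case by simp
next
  case (Cons x xs)
  have "card (tensor_idx (x#xs)) = (\<Sum>ix\<in>tensor_idx (x#xs). 1)" by simp
  also have "\<dots> = x * prod_list xs" unfolding sum_tidx_Cons using Cons by simp
  finally show ?case by simp
qed

lemma sum_prod_tidx:
  "(\<Sum>ix\<in>tensor_idx dims. \<Prod>k<length dims. f k (ix!k)) = (\<Prod>k<length dims. \<Sum>i<dims!k. (f k i :: real))"
proof (induction dims arbitrary: f)
  case Nil then show ?case by simp
next
  case (Cons x xs)
  have "(\<Sum>ix\<in>tensor_idx (x#xs). \<Prod>k<length (x#xs). f k (ix!k))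
      = (\<Sum>i<x. \<Sum>ix\<in>tensor_idx xs. f 0 i * (\<Prod>k<length xs. f (Suc k) (ix!k)))"
    unfolding sum_tidx_Cons by (simp only: length_Cons prod.lessThan_Suc_shift nth_Cons_0 nth_Cons_Suc)
  also have "\<dots> = (\<Sum>i<x. f 0 i) * (\<Sum>ix\<in>tensor_idx xs. (\<Prod>k<length xs. f (Suc k) (ix!k)))"
    by (simp add: sum_product)
  also have "\<dots> = (\<Sum>i<x. f 0 i) * (\<Prod>k<length xs. \<Sum>i<xs!k. f (Suc k) i)"
    using Cons[of "\<lambda>k. f (Suc k)"] by simp
  also have "\<dots> = (\<Prod>k<length (x#xs). \<Sum>i<(x#xs)!k. f k i)"
    by (simp only: length_Cons prod.lessThan_Suc_shift nth_Cons_0 nth_Cons_Suc)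
  finally show ?case .
qed

lemma tidx_length: "ix \<in> tensor_idx dims \<Longrightarrow> length ix = length dims"
  by (simp add: tensor_idx_def)

lemma tidx_update_mem:
  assumes "ix \<in> tensor_idx (dims[j := q])" "i < dims ! j"
  shows "ix[j := i] \<in> tensor_idx dims"
proof -
  have l: "length ix = length dims" and b: "\<forall>k<length dims. ix ! k < dims[j := q] ! k"
    using assms(1) by (auto simp: tensor_idx_def)
  have "ix[j := i] ! k < dims ! k" if "k < length dims" for k
  proof (cases "k = j")
    case True then show ?thesis using l that assms(2) by simp
  next
    case False then show ?thesis using b that by (metis nth_list_update_neq)
  qed
  then show ?thesis using l by (simp add: tensor_idx_def)
qed

lemma sum_tidx_split_at:
  assumes "j < length dims"
  shows "(\<Sum>ix\<in>tensor_idx dims. f ix) = (\<Sum>ix\<in>tensor_idx (dims[j:=1]). \<Sum>i<dims!j. f (ix[j:=i]))"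
proof -
  obtain xs N ys where d: "dims = xs @ N # ys" and j: "j = length xs"
    using assms by (metis id_take_nth_drop length_take min.absorb4)
  have "(\<Sum>ix\<in>tensor_idx dims. f ix) = (\<Sum>a\<in>tensor_idx xs. \<Sum>i<N. \<Sum>b\<in>tensor_idx ys. f (a @ i # b))"
    unfolding d sum_tidx_append sum_tidx_Cons by simp
  also have "\<dots> = (\<Sum>a\<in>tensor_idx xs. \<Sum>b\<in>tensor_idx ys. \<Sum>i<N. f (a @ i # b))"
    by (simp add: sum.swap[where A="{..<N}"])
  also have "\<dots> = (\<Sum>ix\<in>tensor_idx (dims[j:=1]). \<Sum>i<dims!j. f (ix[j:=i]))"
    unfolding d j by (simp add: list_update_append sum_tidx_append sum_tidx_Cons tidx_length)
  finally show ?thesis .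
qed



lemma digit_mod_aux:
  fixes n j e K :: nat
  assumes "n \<ge> 1" "e < K"
  shows "(j mod n ^ K) div n ^ e mod n = j div n ^ e mod n"
proof -
  define b where "b = n ^ (K - e)"
  have K: "n ^ K = n ^ e * b" unfolding b_def using assms by (simp add: power_add[symmetric])
  have pos: "n ^ e > 0" using assms by simp
  have "j mod n ^ K = n ^ e * (j div n ^ e mod b) + j mod n ^ e"
    unfolding K by (rule mod_mult2_eq)
  then have "(j mod n ^ K) div n ^ e = j div n ^ e mod b"
    using pos by simp
  moreover have "n dvd b" unfolding b_def using assms by (simp add: dvd_power)
  ultimately show ?thesis by (simp add: mod_mod_cancel)
qed

lemma length_kdigits[simp]: "length (kdigits n \<kappa> j) = \<kappa>"
  by (simp add: kdigits_def)

lemma kdigits_lt: "n \<ge> 1 \<Longrightarrow> l < \<kappa> \<Longrightarrow> kdigits n \<kappa> j ! l < n"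
  by (simp add: kdigits_def)

lemma kdigits_Suc:
  assumes "n \<ge> 1"
  shows "kdigits n (Suc \<kappa>) j = (j div n ^ \<kappa> mod n) # kdigits n \<kappa> (j mod n ^ \<kappa>)"
proof -
  have "[0..<Suc \<kappa>] = 0 # map Suc [0..<\<kappa>]"
    by (simp add: map_Suc_upt upt_conv_Cons)
  then have "kdigits n (Suc \<kappa>) j = (j div n ^ \<kappa> mod n) # map (\<lambda>l. j div n ^ (\<kappa> - 1 - l) mod n) [0..<\<kappa>]"
    by (simp add: kdigits_def)
  also have "map (\<lambda>l. j div n ^ (\<kappa> - 1 - l) mod n) [0..<\<kappa>] = kdigits n \<kappa> (j mod n ^ \<kappa>)"
    unfolding kdigits_def using digit_mod_aux[OF assms] by (auto intro!: map_cong)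
  finally show ?thesis .
qed

lemma sum_kdigits:
  assumes "n \<ge> 1"
  shows "(\<Sum>j<n ^ \<kappa>. f (kdigits n \<kappa> j)) = (\<Sum>a\<in>tensor_idx (replicate \<kappa> n). (f a :: real))"
proof (induction \<kappa> arbitrary: f)
  case 0 then show ?case by (simp add: kdigits_def)
next
  case (Suc \<kappa>)
  define M where "M = n ^ \<kappa>"
  have Mpos: "M > 0" unfolding M_def using assms by simp
  have "(\<Sum>j<n ^ Suc \<kappa>. f (kdigits n (Suc \<kappa>) j)) = (\<Sum>j<n * M. f (kdigits n (Suc \<kappa>) j))"
    by (simp add: M_def)
  also have "\<dots> = (\<Sum>q<n. \<Sum>j\<in>{q * M..<q * M + M}. f (kdigits n (Suc \<kappa>) j))"
    by (rule sum.nat_group[symmetric])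
  also have "\<dots> = (\<Sum>q<n. \<Sum>r<M. f (kdigits n (Suc \<kappa>) (r + q * M)))"
  proof (rule sum.cong[OF refl])
    fix q
    have e: "{q * M..<q * M + M} = {0 + q * M..<M + q * M}" by (simp add: add.commute)
    show "(\<Sum>j\<in>{q * M..<q * M + M}. f (kdigits n (Suc \<kappa>) j)) = (\<Sum>r<M. f (kdigits n (Suc \<kappa>) (r + q * M)))"
      unfolding e sum.shift_bounds_nat_ivl by (simp add: atLeast0LessThan)
  qed
  also have "\<dots> = (\<Sum>q<n. \<Sum>r<M. f (q # kdigits n \<kappa> r))"
  proof (intro sum.cong refl)
    fix q r assume q: "q \<in> {..<n}" and r: "r \<in> {..<M}"
    have "(r + q * M) div M = q" using r Mpos by simp
    moreover have "(r + q * M) mod M = r" using r by simp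
    ultimately show "f (kdigits n (Suc \<kappa>) (r + q * M)) = f (q # kdigits n \<kappa> r)"
      using q by (simp add: kdigits_Suc[OF assms] M_def[symmetric])
  qed
  also have "\<dots> = (\<Sum>q<n. \<Sum>a\<in>tensor_idx (replicate \<kappa> n). f (q # a))"
    using Suc[of "\<lambda>a. f (_ # a)"] by (simp add: M_def)
  also have "\<dots> = (\<Sum>a\<in>tensor_idx (replicate (Suc \<kappa>) n). f a)"
    by (simp add: sum_tidx_Cons)
  finally show ?case .
qed

lemma sum_reshape:
  assumes "n \<ge> 1"
  shows "(\<Sum>js\<in>tensor_idx (replicate d' (n ^ \<kappa>)). g (concat (map (kdigits n \<kappa>) js)))
       = (\<Sum>ix\<in>tensor_idx (replicate (d' * \<kappa>) n). (g ix :: real))"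
proof (induction d' arbitrary: g)
  case 0 then show ?case by simp
next
  case (Suc d')
  have "(\<Sum>js\<in>tensor_idx (replicate (Suc d') (n ^ \<kappa>)). g (concat (map (kdigits n \<kappa>) js)))
     = (\<Sum>j<n ^ \<kappa>. \<Sum>js\<in>tensor_idx (replicate d' (n ^ \<kappa>)). g (kdigits n \<kappa> j @ concat (map (kdigits n \<kappa>) js)))"
    by (simp add: sum_tidx_Cons)
  also have "\<dots> = (\<Sum>j<n ^ \<kappa>. \<Sum>b\<in>tensor_idx (replicate (d' * \<kappa>) n). g (kdigits n \<kappa> j @ b))"
  proof (rule sum.cong[OF refl])
    fix j
    show "(\<Sum>js\<in>tensor_idx (replicate d' (n ^ \<kappa>)). g (kdigits n \<kappa> j @ concat (map (kdigits n \<kappa>) js)))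
       = (\<Sum>b\<in>tensor_idx (replicate (d' * \<kappa>) n). g (kdigits n \<kappa> j @ b))"
      using Suc[of "\<lambda>b. g (kdigits n \<kappa> j @ b)"] by simp
  qed
  also have "\<dots> = (\<Sum>a\<in>tensor_idx (replicate \<kappa> n). \<Sum>b\<in>tensor_idx (replicate (d' * \<kappa>) n). g (a @ b))"
    by (rule sum_kdigits[OF assms])
  also have "\<dots> = (\<Sum>ix\<in>tensor_idx (replicate \<kappa> n @ replicate (d' * \<kappa>) n). g ix)"
    by (simp add: sum_tidx_append)
  also have "replicate \<kappa> n @ replicate (d' * \<kappa>) n = replicate (Suc d' * \<kappa>) n"
    by (simp add: replicate_add)
  finally show ?case .
qed

lemma concat_nth_blocks:
  assumes "\<forall>x\<in>set xss. length x = \<kappa>" "g < length xss" "l < \<kappa>"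
  shows "concat xss ! (g * \<kappa> + l) = xss ! g ! l"
  using assms
proof (induction xss arbitrary: g)
  case Nil then show ?case by simp
next
  case (Cons x xs)
  show ?case
  proof (cases g)
    case 0 then show ?thesis using Cons by (simp add: nth_append)
  next
    case (Suc g')
    have "concat (x # xs) ! (g * \<kappa> + l) = concat xs ! (g' * \<kappa> + l)"
      using Cons.prems Suc by (simp add: nth_append)
    then show ?thesis using Cons Suc by simp
  qed
qed

lemma prod_group:
  "(\<Prod>k<d' * \<kappa>. F k) = (\<Prod>g<d'. \<Prod>l<\<kappa>. (F (g * \<kappa> + l) :: real))" for d' \<kappa> :: nat
proof -
  have "(\<Prod>k<d' * \<kappa>. F k) = (\<Prod>g<d'. prod F {g * \<kappa>..<g * \<kappa> + \<kappa>})"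
    using prod.nat_group[of F \<kappa> d'] by simp
  also have "\<dots> = (\<Prod>g<d'. \<Prod>l<\<kappa>. F (g * \<kappa> + l))"
  proof (rule prod.cong[OF refl])
    fix g
    have e: "{g * \<kappa>..<g * \<kappa> + \<kappa>} = {0 + g * \<kappa>..<\<kappa> + g * \<kappa>}" by (simp add: add.commute)
    show "prod F {g * \<kappa>..<g * \<kappa> + \<kappa>} = (\<Prod>l<\<kappa>. F (g * \<kappa> + l))"
      unfolding e prod.shift_bounds_nat_ivl by (simp add: atLeast0LessThan add.commute)
  qed
  finally show ?thesis .
qed

lemma sum_prod_tidx_rep:
  "(\<Sum>a\<in>tensor_idx (replicate \<kappa> n). \<Prod>l<\<kappa>. f l (a!l)) = (\<Prod>l<\<kappa>. \<Sum>i<n. (f l i :: real))"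
  using sum_prod_tidx[where dims="replicate \<kappa> n" and f=f] by simp

lemma sum_prod_tidx_map:
  "(\<Sum>a\<in>tensor_idx (map p [0..<d]). \<Prod>k<d. f k (a!k)) = (\<Prod>k<d. \<Sum>i<p k. (f k i :: real))"
  using sum_prod_tidx[where dims="map p [0..<d]" and f=f] by simp

lemma kron_cong: "(\<And>l. l < \<kappa> \<Longrightarrow> us l = vs l) \<Longrightarrow> kron n \<kappa> us = kron n \<kappa> vs"
  unfolding kron_def by (intro ext) (auto intro!: prod.cong)

lemma kron_inner:
  assumes "n \<ge> 1"
  shows "vec_inner (n ^ \<kappa>) (kron n \<kappa> us) (kron n \<kappa> vs) = (\<Prod>l<\<kappa>. vec_inner n (us l) (vs l))"
proof -
  have "vec_inner (n ^ \<kappa>) (kron n \<kappa> us) (kron n \<kappa> vs)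
      = (\<Sum>j<n ^ \<kappa>. (\<lambda>a. \<Prod>l<\<kappa>. us l (a!l) * vs l (a!l)) (kdigits n \<kappa> j))"
    unfolding vec_inner_def kron_def by (auto intro!: sum.cong simp: prod.distrib)
  also have "\<dots> = (\<Sum>a\<in>tensor_idx (replicate \<kappa> n). \<Prod>l<\<kappa>. us l (a!l) * vs l (a!l))"
    by (rule sum_kdigits[OF assms])
  also have "\<dots> = (\<Prod>l<\<kappa>. vec_inner n (us l) (vs l))"
    using sum_prod_tidx_rep[where f="\<lambda>l i. us l i * vs l i" and \<kappa>=\<kappa> and n=n]
    by (simp add: vec_inner_def)
  finally show ?thesis .
qed



lemma vec_inner_comm: "vec_inner N x y = vec_inner N y x"
  by (simp add: vec_inner_def mult.commute)

lemma vec_norm_sq_inner: "vec_norm_sq N x = vec_inner N x x"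
  by (simp add: vec_norm_sq_def vec_inner_def power2_eq_square)

lemma vec_norm_sq_nonneg: "vec_norm_sq N x \<ge> 0"
  by (simp add: vec_norm_sq_def sum_nonneg)

lemma vec_inner_sum_left:
  "vec_inner N (\<lambda>x. \<Sum>i\<in>S. c i * f i x) y = (\<Sum>i\<in>S. c i * vec_inner N (f i) y)"
  unfolding vec_inner_def by (simp add: sum_distrib_right sum_distrib_left sum.swap[where A="{..<N}"] mult.assoc)

lemma vec_inner_diff_left:
  "vec_inner N (\<lambda>x. a x - b x) y = vec_inner N a y - vec_inner N b y"
  unfolding vec_inner_def by (simp add: left_diff_distrib sum_subtractf)

lemma vec_inner_div_left:
  "vec_inner N (\<lambda>x. a x / c) y = vec_inner N a y / c"
  unfolding vec_inner_def by (simp add: sum_divide_distrib)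

lemma norm_sq_add:
  "vec_norm_sq N (\<lambda>i. x i + y i) = vec_norm_sq N x + vec_norm_sq N y + 2 * vec_inner N x y"
  unfolding vec_norm_sq_def vec_inner_def
  by (simp add: power2_sum sum.distrib sum_distrib_left mult.assoc)

lemma norm_sq_div:
  "vec_norm_sq N (\<lambda>i. x i / c) = vec_norm_sq N x / c\<^sup>2"
  unfolding vec_norm_sq_def by (simp add: power_divide sum_divide_distrib)

lemma mat_vec_add_div:
  "mat_vec m N A (\<lambda>i. (x i + y i) / c) = (\<lambda>l. (mat_vec m N A x l + mat_vec m N A y l) / c)"
  unfolding mat_vec_def
  by (auto simp: sum_divide_distrib sum.distrib[symmetric] distrib_left intro!: sum.cong)

lemma rip_diag:
  assumes "RIP m N A \<epsilon> (S12 n \<kappa>)" "x \<in> S1 n \<kappa>" "vec_norm_sq N x = 1"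
  shows "\<bar>vec_norm_sq m (mat_vec m N A x) - 1\<bar> \<le> \<epsilon>"
proof -
  have "x \<in> S12 n \<kappa>" using assms(2) by (simp add: S12_def)
  then have "(1 - \<epsilon>) * vec_norm_sq N x \<le> vec_norm_sq m (mat_vec m N A x) \<and>
      vec_norm_sq m (mat_vec m N A x) \<le> (1 + \<epsilon>) * vec_norm_sq N x"
    using assms(1) unfolding RIP_def by blast
  then show ?thesis using assms(3) by (simp add: abs_le_iff)
qed

lemma rip_off:
  assumes R: "RIP m N A \<epsilon> (S12 n \<kappa>)" and N: "N = n ^ \<kappa>"
    and x: "x \<in> S1 n \<kappa>" "vec_norm_sq N x = 1"
    and y: "y \<in> S1 n \<kappa>" "vec_norm_sq N y = 1"
    and o: "vec_inner N x y = 0"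
  shows "\<bar>vec_inner m (mat_vec m N A x) (mat_vec m N A y)\<bar> \<le> 2 * \<epsilon>"
proof -
  have n2: "vec_norm_sq N (\<lambda>i. x i + y i) = 2"
    using x y o by (simp add: norm_sq_add)
  define s where "s = (\<lambda>i. (x i + y i) / sqrt (vec_norm_sq (n ^ \<kappa>) (\<lambda>i. x i + y i)))"
  have sS: "s \<in> S12 n \<kappa>"
    unfolding S12_def S2_def s_def using x y o N by blast
  have s: "s = (\<lambda>i. (x i + y i) / sqrt 2)" unfolding s_def using n2 N by simp
  have ns: "vec_norm_sq N s = 1" unfolding s norm_sq_div[where x="\<lambda>i. x i + y i"] n2 by simp
  have As: "vec_norm_sq m (mat_vec m N A s) =
      (vec_norm_sq m (mat_vec m N A x) + vec_norm_sq m (mat_vec m N A y)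
        + 2 * vec_inner m (mat_vec m N A x) (mat_vec m N A y)) / 2"
    unfolding s mat_vec_add_div
    using norm_sq_div[where x="\<lambda>l. mat_vec m N A x l + mat_vec m N A y l" and c="sqrt 2" and N=m]
    by (simp add: norm_sq_add)
  have b: "\<bar>vec_norm_sq m (mat_vec m N A s) - 1\<bar> \<le> \<epsilon>"
  proof -
    have "(1 - \<epsilon>) * vec_norm_sq N s \<le> vec_norm_sq m (mat_vec m N A s) \<and>
      vec_norm_sq m (mat_vec m N A s) \<le> (1 + \<epsilon>) * vec_norm_sq N s"
      using R sS unfolding RIP_def by blast
    then show ?thesis using ns by (simp add: abs_le_iff)
  qed
  have bx: "\<bar>vec_norm_sq m (mat_vec m N A x) - 1\<bar> \<le> \<epsilon>"
    using rip_diag[OF R x(1) x(2)] .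
  have by': "\<bar>vec_norm_sq m (mat_vec m N A y) - 1\<bar> \<le> \<epsilon>"
    using rip_diag[OF R y(1) y(2)] .
  define t1 where "t1 = vec_norm_sq m (mat_vec m N A s)"
  define t2 where "t2 = vec_norm_sq m (mat_vec m N A x)"
  define t3 where "t3 = vec_norm_sq m (mat_vec m N A y)"
  define t4 where "t4 = vec_inner m (mat_vec m N A x) (mat_vec m N A y)"
  have "2 * t1 = t2 + t3 + 2 * t4" using As unfolding t1_def t2_def t3_def t4_def by simp
  moreover have "\<bar>t1 - 1\<bar> \<le> \<epsilon>" "\<bar>t2 - 1\<bar> \<le> \<epsilon>" "\<bar>t3 - 1\<bar> \<le> \<epsilon>"
    using b bx by' unfolding t1_def t2_def t3_def by auto
  ultimately have "\<bar>t4\<bar> \<le> 2 * \<epsilon>" by linarith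
  then show ?thesis unfolding t4_def .
qed

definition orthonormal_list :: "nat \<Rightarrow> (nat \<Rightarrow> real) list \<Rightarrow> bool" where
  "orthonormal_list n es \<longleftrightarrow> (\<forall>e\<in>set es. is_vec n e) \<and>
     (\<forall>i<length es. \<forall>j<length es. vec_inner n (es!i) (es!j) = (if i = j then 1 else 0))"

lemma vec_norm_sq_zero:
  assumes "is_vec n w" "vec_norm_sq n w = 0"
  shows "w = (\<lambda>x. 0)"
proof
  fix x
  show "w x = 0"
  proof (cases "x < n")
    case True
    have "\<forall>i\<in>{..<n}. (w i)\<^sup>2 = 0"
      using assms(2) unfolding vec_norm_sq_def by (subst (asm) sum_nonneg_eq_0_iff) auto
    then show ?thesis using True by simp
  next
    case False then show ?thesis using assms(1) by (simp add: is_vec_def)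
  qed
qed

lemma gram_schmidt:
  assumes "\<forall>b\<in>set bs. is_vec n b"
  shows "\<exists>es. length es \<le> length bs \<and> orthonormal_list n es \<and>
           (\<forall>b\<in>set bs. \<exists>c. b = (\<lambda>x. \<Sum>i<length es. c i * (es!i) x))"
  using assms
proof (induction bs)
  case Nil then show ?case by (auto simp: orthonormal_list_def)
next
  case (Cons b bs)
  then obtain es where len: "length es \<le> length bs" and on: "orthonormal_list n es"
    and sp: "\<forall>b\<in>set bs. \<exists>c. b = (\<lambda>x. \<Sum>i<length es. c i * (es!i) x)" by auto
  define k where "k = length es"
  define c0 where "c0 = (\<lambda>i. vec_inner n b (es!i))"
  define w where "w = (\<lambda>x. b x - (\<Sum>i<k. c0 i * (es!i) x))"
  have bvec: "is_vec n b" using Cons.prems by simp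
  have evec: "\<And>i. i < k \<Longrightarrow> is_vec n (es!i)" using on unfolding orthonormal_list_def k_def by auto
  have wvec: "is_vec n w" using bvec evec unfolding w_def is_vec_def by auto
  have eorth: "\<And>i j. i < k \<Longrightarrow> j < k \<Longrightarrow> vec_inner n (es!i) (es!j) = (if i = j then 1 else 0)"
    using on unfolding orthonormal_list_def k_def by auto
  have worth: "vec_inner n w (es!j) = 0" if j: "j < k" for j
  proof -
    have "vec_inner n w (es!j) = vec_inner n b (es!j) - (\<Sum>i<k. c0 i * vec_inner n (es!i) (es!j))"
      unfolding w_def vec_inner_diff_left vec_inner_sum_left ..
    also have "(\<Sum>i<k. c0 i * vec_inner n (es!i) (es!j)) = (\<Sum>i<k. if i = j then c0 i else 0)"
      using eorth j by (intro sum.cong) auto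
    also have "\<dots> = c0 j" using j by (simp add: sum.delta)
    finally show ?thesis by (simp add: c0_def)
  qed
  show ?case
  proof (cases "vec_norm_sq n w = 0")
    case True
    then have w0: "w = (\<lambda>x. 0)" using vec_norm_sq_zero[OF wvec] by simp
    have "b = (\<lambda>x. \<Sum>i<length es. c0 i * (es!i) x)"
    proof
      fix x show "b x = (\<Sum>i<length es. c0 i * (es!i) x)"
        using fun_cong[OF w0, of x] unfolding w_def k_def by simp
    qed
    then show ?thesis using len on sp by (intro exI[of _ es]) auto
  next
    case False
    define nw where "nw = sqrt (vec_norm_sq n w)"
    have nwpos: "nw > 0" using False vec_norm_sq_nonneg[of n w] unfolding nw_def by simp
    define u where "u = (\<lambda>x. w x / nw)"
    define es' where "es' = es @ [u]"
    have uvec: "is_vec n u" using wvec unfolding u_def is_vec_def by simp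
    have uu: "vec_inner n u u = 1"
    proof -
      have "vec_inner n u u = vec_norm_sq n w / nw\<^sup>2"
        unfolding u_def vec_norm_sq_inner[symmetric] norm_sq_div ..
      also have "\<dots> = 1" using False vec_norm_sq_nonneg[of n w] unfolding nw_def by simp
      finally show ?thesis .
    qed
    have ue: "vec_inner n u (es!j) = 0" if "j < k" for j
      unfolding u_def vec_inner_div_left using worth[OF that] by simp
    have on': "orthonormal_list n es'"
      unfolding orthonormal_list_def
    proof (intro conjI allI impI)
      show "\<forall>e\<in>set es'. is_vec n e" using on uvec unfolding es'_def orthonormal_list_def by auto
      fix i j assume i: "i < length es'" and j: "j < length es'"
      then have i': "i \<le> k" and j': "j \<le> k" unfolding es'_def k_def by auto
      show "vec_inner n (es'!i) (es'!j) = (if i = j then 1 else 0)"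
      proof (cases "i = k"; cases "j = k")
        assume "i = k" "j = k" then show ?thesis using uu by (simp add: es'_def k_def)
      next
        assume "i = k" "j \<noteq> k" then show ?thesis using ue[of j] j' by (simp add: es'_def k_def nth_append)
      next
        assume "i \<noteq> k" "j = k" then show ?thesis using ue[of i] i' vec_inner_comm[of n u]
          by (simp add: es'_def k_def nth_append)
      next
        assume "i \<noteq> k" "j \<noteq> k" then show ?thesis using eorth[of i j] i' j'
          by (simp add: es'_def k_def nth_append)
      qed
    qed
    have sp': "\<forall>b'\<in>set (b # bs). \<exists>c. b' = (\<lambda>x. \<Sum>i<length es'. c i * (es'!i) x)"
    proof
      fix b' assume "b' \<in> set (b # bs)"
      then consider "b' = b" | "b' \<in> set bs" by auto
      then show "\<exists>c. b' = (\<lambda>x. \<Sum>i<length es'. c i * (es'!i) x)"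
      proof cases
        case 1
        have "b' = (\<lambda>x. \<Sum>i<length es'. (c0(k := nw)) i * (es'!i) x)"
        proof
          fix x
          have "(\<Sum>i<length es'. (c0(k := nw)) i * (es'!i) x) = (\<Sum>i<k. c0 i * (es!i) x) + nw * u x"
            by (simp add: es'_def k_def nth_append)
          also have "\<dots> = b x" using nwpos unfolding u_def w_def by simp
          finally show "b' x = (\<Sum>i<length es'. (c0(k := nw)) i * (es'!i) x)" using 1 by simp
        qed
        then show ?thesis by blast
      next
        case 2
        then obtain c where c: "b' = (\<lambda>x. \<Sum>i<length es. c i * (es!i) x)" using sp by blast
        have "b' = (\<lambda>x. \<Sum>i<length es'. (c(k := 0)) i * (es'!i) x)"
        proof
          fix x
          have "(\<Sum>i<length es'. (c(k := 0)) i * (es'!i) x) = (\<Sum>i<k. c i * (es!i) x)"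
            by (simp add: es'_def k_def nth_append)
          then show "b' x = (\<Sum>i<length es'. (c(k := 0)) i * (es'!i) x)" using c k_def by simp
        qed
        then show ?thesis by blast
      qed
    qed
    have "length es' \<le> length (b # bs)" using len unfolding es'_def by simp
    then show ?thesis using on' sp' by blast
  qed
qed

lemma span_repr:
  assumes fin: "finite I"
    and rep: "\<forall>v\<in>S. \<exists>c. \<forall>x\<in>Q. v x = (\<Sum>i\<in>I. c i * B i x)"
    and u: "u \<in> vec_span S"
  shows "\<exists>a. \<forall>x\<in>Q. u x = (\<Sum>i\<in>I. a i * B i x)"
proof -
  obtain F cf where F: "finite F" "F \<subseteq> S" and u': "u = (\<lambda>x. \<Sum>w\<in>F. cf w * w x)"
    using u unfolding vec_span_def by blast
  obtain cc where cc: "\<forall>v\<in>S. \<forall>x\<in>Q. v x = (\<Sum>i\<in>I. cc v i * B i x)"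
    using rep by metis
  have "\<forall>x\<in>Q. u x = (\<Sum>i\<in>I. (\<Sum>w\<in>F. cf w * cc w i) * B i x)"
  proof
    fix x assume x: "x \<in> Q"
    have "u x = (\<Sum>w\<in>F. cf w * (\<Sum>i\<in>I. cc w i * B i x))"
      unfolding u' using cc F x by (auto intro!: sum.cong)
    also have "\<dots> = (\<Sum>i\<in>I. (\<Sum>w\<in>F. cf w * cc w i) * B i x)"
      by (simp add: sum_distrib_left sum_distrib_right sum.swap[where A=F] mult.assoc)
    finally show "u x = (\<Sum>i\<in>I. (\<Sum>w\<in>F. cf w * cc w i) * B i x)" .
  qed
  then show ?thesis by (intro exI[where x="\<lambda>i. \<Sum>w\<in>F. cf w * cc w i"]) simp
qed



lemma gram_expand:
  assumes j: "j < length dims'" and M: "dims' ! j = M" and fT: "finite T"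
    and inv: "\<forall>t\<in>T. \<forall>ix i. Z t (ix[j:=i]) = Z t ix"
  shows "fro_sq dims' (\<lambda>ix. if ix \<in> tensor_idx dims' then \<Sum>t\<in>T. v t (ix!j) * Z t ix else 0)
    = (\<Sum>t\<in>T. \<Sum>s\<in>T. vec_inner M (v t) (v s) * (\<Sum>ix\<in>tensor_idx (dims'[j:=1]). Z t ix * Z s ix))"
proof -
  have "fro_sq dims' (\<lambda>ix. if ix \<in> tensor_idx dims' then \<Sum>t\<in>T. v t (ix!j) * Z t ix else 0)
      = (\<Sum>ix\<in>tensor_idx dims'. (\<Sum>t\<in>T. v t (ix!j) * Z t ix)\<^sup>2)"
    unfolding fro_sq_def by (intro sum.cong) auto
  also have "\<dots> = (\<Sum>ix\<in>tensor_idx (dims'[j:=1]). \<Sum>i<M. (\<Sum>t\<in>T. v t (ix[j:=i]!j) * Z t (ix[j:=i]))\<^sup>2)"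
    using sum_tidx_split_at[OF j] M by simp
  also have "\<dots> = (\<Sum>ix\<in>tensor_idx (dims'[j:=1]). \<Sum>i<M. (\<Sum>t\<in>T. v t i * Z t ix)\<^sup>2)"
  proof (rule sum.cong[OF refl])
    fix ix assume "ix \<in> tensor_idx (dims'[j:=1])"
    then have "j < length ix" using j by (simp add: tidx_length)
    then show "(\<Sum>i<M. (\<Sum>t\<in>T. v t (ix[j:=i]!j) * Z t (ix[j:=i]))\<^sup>2) = (\<Sum>i<M. (\<Sum>t\<in>T. v t i * Z t ix)\<^sup>2)"
      using inv by simp
  qed
  also have "\<dots> = (\<Sum>ix\<in>tensor_idx (dims'[j:=1]). \<Sum>i<M. \<Sum>t\<in>T. \<Sum>s\<in>T. (v t i * v s i) * (Z t ix * Z s ix))"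
    by (simp add: power2_eq_square sum_product mult_ac)
  also have "\<dots> = (\<Sum>t\<in>T. \<Sum>s\<in>T. \<Sum>ix\<in>tensor_idx (dims'[j:=1]). \<Sum>i<M. (v t i * v s i) * (Z t ix * Z s ix))"
  proof -
    let ?F = "\<lambda>ix i t s. (v t i * v s i) * (Z t ix * Z s ix)"
    have "(\<Sum>ix\<in>tensor_idx (dims'[j:=1]). \<Sum>i<M. \<Sum>t\<in>T. \<Sum>s\<in>T. ?F ix i t s)
        = (\<Sum>ix\<in>tensor_idx (dims'[j:=1]). \<Sum>t\<in>T. \<Sum>i<M. \<Sum>s\<in>T. ?F ix i t s)"
      by (rule sum.cong[OF refl], rule sum.swap)
    also have "\<dots> = (\<Sum>ix\<in>tensor_idx (dims'[j:=1]). \<Sum>t\<in>T. \<Sum>s\<in>T. \<Sum>i<M. ?F ix i t s)"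
      by (rule sum.cong[OF refl], rule sum.cong[OF refl], rule sum.swap)
    also have "\<dots> = (\<Sum>t\<in>T. \<Sum>ix\<in>tensor_idx (dims'[j:=1]). \<Sum>s\<in>T. \<Sum>i<M. ?F ix i t s)"
      by (rule sum.swap)
    also have "\<dots> = (\<Sum>t\<in>T. \<Sum>s\<in>T. \<Sum>ix\<in>tensor_idx (dims'[j:=1]). \<Sum>i<M. ?F ix i t s)"
      by (rule sum.cong[OF refl], rule sum.swap)
    finally show ?thesis .
  qed
  also have "\<dots> = (\<Sum>t\<in>T. \<Sum>s\<in>T. vec_inner M (v t) (v s) * (\<Sum>ix\<in>tensor_idx (dims'[j:=1]). Z t ix * Z s ix))"
    unfolding vec_inner_def sum_product
    by (rule sum.cong[OF refl], rule sum.cong[OF refl], rule sum.swap)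
  finally show ?thesis .
qed

lemma abs_prod_le_half: "\<bar>a * b\<bar> \<le> (a * a + b * b) / (2::real)"
proof -
  have "0 \<le> (\<bar>a\<bar> - \<bar>b\<bar>)\<^sup>2" by simp
  then show ?thesis by (simp add: power2_eq_square abs_mult algebra_simps)
qed

lemma regroup:
  assumes fI: "finite I" and fT: "finite T" and hI: "h ` I \<subseteq> T"
  shows "(\<Sum>\<iota>\<in>I. (D \<iota> :: real) * v (h \<iota>) x * Z \<iota> ix) = (\<Sum>t\<in>T. v t x * (\<Sum>\<iota>\<in>{\<iota>\<in>I. h \<iota> = t}. D \<iota> * Z \<iota> ix))"
proof -
  have "(\<Sum>t\<in>T. v t x * (\<Sum>\<iota>\<in>{\<iota>\<in>I. h \<iota> = t}. D \<iota> * Z \<iota> ix))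
      = (\<Sum>t\<in>T. \<Sum>\<iota>\<in>{\<iota>\<in>I. h \<iota> = t}. D \<iota> * v (h \<iota>) x * Z \<iota> ix)"
  proof (rule sum.cong[OF refl])
    fix t assume "t \<in> T"
    have "v t x * (\<Sum>\<iota>\<in>{\<iota>\<in>I. h \<iota> = t}. D \<iota> * Z \<iota> ix) = (\<Sum>\<iota>\<in>{\<iota>\<in>I. h \<iota> = t}. v t x * (D \<iota> * Z \<iota> ix))"
      by (rule sum_distrib_left)
    also have "\<dots> = (\<Sum>\<iota>\<in>{\<iota>\<in>I. h \<iota> = t}. D \<iota> * v (h \<iota>) x * Z \<iota> ix)"
      by (rule sum.cong) auto
    finally show "v t x * (\<Sum>\<iota>\<in>{\<iota>\<in>I. h \<iota> = t}. D \<iota> * Z \<iota> ix) = (\<Sum>\<iota>\<in>{\<iota>\<in>I. h \<iota> = t}. D \<iota> * v (h \<iota>) x * Z \<iota> ix)" .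
  qed
  also have "\<dots> = (\<Sum>\<iota>\<in>I. D \<iota> * v (h \<iota>) x * Z \<iota> ix)"
    by (rule sum.group[OF fI fT hI])
  finally show ?thesis by simp
qed

lemma step_form:
  assumes j: "j < length dims" and N: "dims ! j = N"
    and inv: "\<forall>\<iota>\<in>I. \<forall>ix i. Z \<iota> (ix[j:=i]) = Z \<iota> ix"
    and Y: "Y = (\<lambda>ix. if ix \<in> tensor_idx dims then \<Sum>\<iota>\<in>I. D \<iota> * w (h \<iota>) (ix!j) * Z \<iota> ix else 0)"
  shows "mode_prod dims j m A Y = (\<lambda>ix. if ix \<in> tensor_idx (dims[j:=m])
            then \<Sum>\<iota>\<in>I. D \<iota> * mat_vec m N A (w (h \<iota>)) (ix!j) * Z \<iota> ix else 0)"
proof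
  fix ix
  show "mode_prod dims j m A Y ix = (if ix \<in> tensor_idx (dims[j:=m])
            then \<Sum>\<iota>\<in>I. D \<iota> * mat_vec m N A (w (h \<iota>)) (ix!j) * Z \<iota> ix else 0)"
  proof (cases "ix \<in> tensor_idx (dims[j:=m])")
    case False then show ?thesis by (simp add: mode_prod_def)
  next
    case True
    have lj: "j < length ix" using True j by (simp add: tidx_length)
    have ixj: "ix ! j < m" using True j unfolding tensor_idx_def by auto
    have "mode_prod dims j m A Y ix = (\<Sum>i<N. Y (ix[j := i]) * A (ix ! j) i)"
      using True N by (simp add: mode_prod_def)
    also have "\<dots> = (\<Sum>i<N. (\<Sum>\<iota>\<in>I. D \<iota> * w (h \<iota>) i * Z \<iota> ix) * A (ix ! j) i)"
    proof (rule sum.cong[OF refl])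
      fix i assume "i \<in> {..<N}"
      then have "ix[j := i] \<in> tensor_idx dims" using tidx_update_mem[OF True] N by simp
      then show "Y (ix[j := i]) * A (ix ! j) i = (\<Sum>\<iota>\<in>I. D \<iota> * w (h \<iota>) i * Z \<iota> ix) * A (ix ! j) i"
        using lj inv unfolding Y by simp
    qed
    also have "\<dots> = (\<Sum>\<iota>\<in>I. D \<iota> * (\<Sum>i<N. A (ix ! j) i * w (h \<iota>) i) * Z \<iota> ix)"
      by (simp add: sum_distrib_left sum_distrib_right sum.swap[where A="{..<N}"] mult_ac)
    also have "\<dots> = (\<Sum>\<iota>\<in>I. D \<iota> * mat_vec m N A (w (h \<iota>)) (ix!j) * Z \<iota> ix)"
      using ixj by (simp add: mat_vec_def)
    finally show ?thesis using True by simp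
  qed
qed

lemma step_bound:
  assumes j: "j < length dims" and N: "dims ! j = N"
    and fI: "finite I" and fT: "finite T" and hI: "h ` I \<subseteq> T"
    and orth: "\<forall>t\<in>T. \<forall>s\<in>T. vec_inner N (w t) (w s) = (if t = s then 1 else 0)"
    and gram: "\<forall>t\<in>T. \<forall>s\<in>T. \<bar>vec_inner m (mat_vec m N A (w t)) (mat_vec m N A (w s)) - vec_inner N (w t) (w s)\<bar> \<le> c"
    and inv: "\<forall>\<iota>\<in>I. \<forall>ix i. Z \<iota> (ix[j:=i]) = Z \<iota> ix"
    and Y: "Y = (\<lambda>ix. if ix \<in> tensor_idx dims then \<Sum>\<iota>\<in>I. D \<iota> * w (h \<iota>) (ix!j) * Z \<iota> ix else 0)"
  shows "\<bar>fro_sq (dims[j:=m]) (mode_prod dims j m A Y) - fro_sq dims Y\<bar> \<le> c * card T * fro_sq dims Y"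
proof -
  define Zt where "Zt = (\<lambda>t ix. \<Sum>\<iota>\<in>{\<iota>\<in>I. h \<iota> = t}. D \<iota> * Z \<iota> ix)"
  have invt: "\<forall>t\<in>T. \<forall>ix i. Zt t (ix[j:=i]) = Zt t ix"
    using inv unfolding Zt_def by auto
  define Q where "Q = (\<lambda>t s. \<Sum>ix\<in>tensor_idx (dims[j:=1]). Zt t ix * Zt s ix)"
  have Y': "Y = (\<lambda>ix. if ix \<in> tensor_idx dims then \<Sum>t\<in>T. w t (ix!j) * Zt t ix else 0)"
    unfolding Y Zt_def by (rule ext) (simp add: regroup[OF fI fT hI, where v=w and D=D and Z=Z])
  have P': "mode_prod dims j m A Y = (\<lambda>ix. if ix \<in> tensor_idx (dims[j:=m])
       then \<Sum>t\<in>T. mat_vec m N A (w t) (ix!j) * Zt t ix else 0)"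
    unfolding step_form[where D=D and w=w and h=h, OF j N inv Y] Zt_def
    by (rule ext) (simp add: regroup[OF fI fT hI, where v="\<lambda>t. mat_vec m N A (w t)" and D=D and Z=Z])
  have fY: "fro_sq dims Y = (\<Sum>t\<in>T. \<Sum>s\<in>T. vec_inner N (w t) (w s) * Q t s)"
    unfolding Y' Q_def by (rule gram_expand[OF j N fT invt])
  have fP: "fro_sq (dims[j:=m]) (mode_prod dims j m A Y)
      = (\<Sum>t\<in>T. \<Sum>s\<in>T. vec_inner m (mat_vec m N A (w t)) (mat_vec m N A (w s)) * Q t s)"
    unfolding P' Q_def using gram_expand[of j "dims[j:=m]" m T Zt "\<lambda>t. mat_vec m N A (w t)"] j invt fT
    by simp
  have fY2: "fro_sq dims Y = (\<Sum>t\<in>T. Q t t)"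
  proof -
    have "(\<Sum>t\<in>T. \<Sum>s\<in>T. vec_inner N (w t) (w s) * Q t s) = (\<Sum>t\<in>T. \<Sum>s\<in>T. if t = s then Q t s else 0)"
      using orth by (intro sum.cong refl) simp
    also have "\<dots> = (\<Sum>t\<in>T. Q t t)" using fT by (simp add: sum.delta)
    finally show ?thesis unfolding fY .
  qed
  have Qts: "\<bar>Q t s\<bar> \<le> (Q t t + Q s s) / 2" for t s
  proof -
    have "\<bar>Q t s\<bar> \<le> (\<Sum>ix\<in>tensor_idx (dims[j:=1]). \<bar>Zt t ix * Zt s ix\<bar>)"
      unfolding Q_def by (rule sum_abs)
    also have "\<dots> \<le> (\<Sum>ix\<in>tensor_idx (dims[j:=1]). (Zt t ix * Zt t ix + Zt s ix * Zt s ix) / 2)"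
      by (intro sum_mono abs_prod_le_half)
    also have "\<dots> = (Q t t + Q s s) / 2"
      unfolding Q_def by (simp add: sum_divide_distrib[symmetric] sum.distrib[symmetric])
    finally show ?thesis .
  qed
  have "\<bar>fro_sq (dims[j:=m]) (mode_prod dims j m A Y) - fro_sq dims Y\<bar>
      = \<bar>\<Sum>t\<in>T. \<Sum>s\<in>T. (vec_inner m (mat_vec m N A (w t)) (mat_vec m N A (w s)) - vec_inner N (w t) (w s)) * Q t s\<bar>"
    unfolding fP fY by (simp add: sum_subtractf left_diff_distrib)
  also have "\<dots> \<le> (\<Sum>t\<in>T. \<Sum>s\<in>T. \<bar>(vec_inner m (mat_vec m N A (w t)) (mat_vec m N A (w s)) - vec_inner N (w t) (w s)) * Q t s\<bar>)"
    by (rule order_trans[OF sum_abs], rule sum_mono, rule sum_abs)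
  also have "\<dots> \<le> (\<Sum>t\<in>T. \<Sum>s\<in>T. c * ((Q t t + Q s s) / 2))"
  proof (intro sum_mono)
    fix t s assume t: "t \<in> T" and s: "s \<in> T"
    show "\<bar>(vec_inner m (mat_vec m N A (w t)) (mat_vec m N A (w s)) - vec_inner N (w t) (w s)) * Q t s\<bar>
        \<le> c * ((Q t t + Q s s) / 2)"
    proof -
      have c0: "0 \<le> c" using gram t s by (meson abs_ge_zero order_trans)
      show ?thesis unfolding abs_mult
        by (rule mult_mono) (use gram t s Qts c0 in auto)
    qed
  qed
  also have "\<dots> = c * card T * (\<Sum>t\<in>T. Q t t)"
    by (simp add: sum_distrib_left[symmetric] sum_divide_distrib[symmetric] sum.distrib)
  finally show ?thesis unfolding fY2 .
qed



lemma pow_upper_aux: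
  fixes a :: real
  assumes "a \<ge> 0"
  shows "(1 + a) ^ k * (1 - real k * a) \<le> 1"
proof (induction k)
  case 0 then show ?case by simp
next
  case (Suc k)
  have "(1 + a) * (1 - real (Suc k) * a) = 1 - real k * a - (real k + 1) * a * a"
    by (simp add: algebra_simps)
  also have "\<dots> \<le> 1 - real k * a" using assms by simp
  finally have h: "(1 + a) * (1 - real (Suc k) * a) \<le> 1 - real k * a" .
  have "(1 + a) ^ Suc k * (1 - real (Suc k) * a) = (1 + a) ^ k * ((1 + a) * (1 - real (Suc k) * a))"
    by (simp add: mult_ac)
  also have "\<dots> \<le> (1 + a) ^ k * (1 - real k * a)"
    using h assms by (intro mult_left_mono) auto
  also have "\<dots> \<le> 1" using Suc .
  finally show ?case .
qed

lemma pow_upper: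
  fixes a :: real
  assumes "a \<ge> 0" "real k * a \<le> 1/2"
  shows "(1 + a) ^ k \<le> 1 + 2 * real k * a"
proof -
  define x where "x = real k * a"
  have x0: "0 \<le> x" using assms unfolding x_def by simp
  have P: "(1 + a) ^ k * (1 - x) \<le> 1" unfolding x_def by (rule pow_upper_aux[OF assms(1)])
  have Q: "1 \<le> (1 + 2 * x) * (1 - x)"
  proof -
    have "(1 + 2 * x) * (1 - x) = 1 + x * (1 - 2 * x)" by (simp add: algebra_simps)
    moreover have "x * (1 - 2 * x) \<ge> 0" using x0 assms(2) unfolding x_def by simp
    ultimately show ?thesis by simp
  qed
  have "(1 + a) ^ k * (1 - x) \<le> (1 + 2 * x) * (1 - x)" using P Q by simp
  moreover have "1 - x > 0" using assms(2) unfolding x_def by simp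
  ultimately have "(1 + a) ^ k \<le> 1 + 2 * x" by simp
  then show ?thesis unfolding x_def by simp
qed

lemma pow_lower:
  fixes a :: real
  assumes "a \<le> 1"
  shows "1 - real k * a \<le> (1 - a) ^ k"
  using Bernoulli_inequality[of "-a" k] assms by simp

lemma prod_indicator:
  "(\<Prod>l<\<kappa>. if P l then (1::real) else 0) = (if \<forall>l<\<kappa>. P l then 1 else 0)" for \<kappa> :: nat
proof (cases "\<forall>l<\<kappa>. P l")
  case True then show ?thesis by simp
next
  case False
  then obtain l where "l < \<kappa>" "\<not> P l" by auto
  then have "\<exists>l\<in>{..<\<kappa>}. (if P l then (1::real) else 0) = 0" by auto
  then have "(\<Prod>l<\<kappa>. if P l then (1::real) else 0) = 0"
    by (intro prod_zero) simp_all
  then show ?thesis using False by simp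
qed



lemma X_repr:
  assumes "hosvd_rank_le n d r X"
  shows "\<exists>p E D. (\<forall>k<d. p k \<le> r) \<and> (\<forall>k<d. \<forall>i<p k. is_vec n (E k i)) \<and>
    (\<forall>k<d. \<forall>i<p k. \<forall>i'<p k. vec_inner n (E k i) (E k i') = (if i = i' then 1 else 0)) \<and>
    (\<forall>ix\<in>tensor_idx (replicate d n). X ix = (\<Sum>\<iota>\<in>tensor_idx (map p [0..<d]). D \<iota> * (\<Prod>k<d. E k (\<iota>!k) (ix!k))))"
proof -
  obtain U where U: "\<forall>k<d. subspace_dim n r (U k)"
    and X: "X \<in> vec_span {outer n d xs | xs. \<forall>k<d. xs k \<in> U k}"
    using assms unfolding hosvd_rank_le_def by blast
  have "\<forall>k. \<exists>bk. k < d \<longrightarrow> (\<forall>j<r. is_vec n (bk j)) \<and> U k = vec_span (bk ` {..<r})"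
    using U unfolding subspace_dim_def by blast
  then obtain b where b: "\<forall>k<d. (\<forall>j<r. is_vec n (b k j)) \<and> U k = vec_span (b k ` {..<r})"
    by metis
  have "\<forall>k. \<exists>es. k < d \<longrightarrow> length es \<le> r \<and> orthonormal_list n es \<and>
          (\<forall>v\<in>b k ` {..<r}. \<exists>c. v = (\<lambda>x. \<Sum>i<length es. c i * (es!i) x))"
  proof
    fix k
    show "\<exists>es. k < d \<longrightarrow> length es \<le> r \<and> orthonormal_list n es \<and>
          (\<forall>v\<in>b k ` {..<r}. \<exists>c. v = (\<lambda>x. \<Sum>i<length es. c i * (es!i) x))"
    proof (cases "k < d")
      case True
      have "\<forall>bb\<in>set (map (b k) [0..<r]). is_vec n bb" using b True by auto
      from gram_schmidt[OF this] obtain es where "length es \<le> r" "orthonormal_list n es"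
        "\<forall>bb\<in>set (map (b k) [0..<r]). \<exists>c. bb = (\<lambda>x. \<Sum>i<length es. c i * (es!i) x)"
        by auto
      then show ?thesis by auto
    qed simp
  qed
  then obtain es where es: "\<forall>k<d. length (es k) \<le> r \<and> orthonormal_list n (es k) \<and>
          (\<forall>v\<in>b k ` {..<r}. \<exists>c. v = (\<lambda>x. \<Sum>i<length (es k). c i * (es k!i) x))"
    by metis
  define p where "p = (\<lambda>k. length (es k))"
  define E where "E = (\<lambda>k i. es k ! i)"
  define I where "I = tensor_idx (map p [0..<d])"
  have pr: "\<forall>k<d. p k \<le> r" using es unfolding p_def by auto
  have Ev: "\<forall>k<d. \<forall>i<p k. is_vec n (E k i)"
    using es unfolding p_def E_def orthonormal_list_def by auto
  have Eo: "\<forall>k<d. \<forall>i<p k. \<forall>i'<p k. vec_inner n (E k i) (E k i') = (if i = i' then 1 else 0)"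
    using es unfolding p_def E_def orthonormal_list_def by auto
  have xsrep: "\<exists>a. \<forall>x\<in>UNIV. xs k x = (\<Sum>i\<in>{..<p k}. a i * E k i x)"
    if k: "k < d" and xk: "xs k \<in> U k" for xs k
  proof (rule span_repr)
    show "finite {..<p k}" by simp
    show "\<forall>v\<in>b k ` {..<r}. \<exists>c. \<forall>x\<in>UNIV. v x = (\<Sum>i\<in>{..<p k}. c i * E k i x)"
    proof
      fix v assume "v \<in> b k ` {..<r}"
      then obtain c where "v = (\<lambda>x. \<Sum>i<length (es k). c i * (es k!i) x)" using es k by blast
      then show "\<exists>c. \<forall>x\<in>UNIV. v x = (\<Sum>i\<in>{..<p k}. c i * E k i x)"
        unfolding p_def E_def by auto
    qed
    show "xs k \<in> vec_span (b k ` {..<r})" using xk b k by auto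
  qed
  have outer_rep: "\<exists>c. \<forall>ix\<in>tensor_idx (replicate d n). v ix = (\<Sum>\<iota>\<in>I. c \<iota> * (\<Prod>k<d. E k (\<iota>!k) (ix!k)))"
    if vmem: "v \<in> {outer n d xs | xs. \<forall>k<d. xs k \<in> U k}" for v
  proof -
    obtain xs where v: "v = outer n d xs" and xs: "\<forall>k<d. xs k \<in> U k" using vmem by blast
    have "\<forall>k. \<exists>a. k < d \<longrightarrow> (\<forall>x. xs k x = (\<Sum>i\<in>{..<p k}. a i * E k i x))"
    proof
      fix k
      show "\<exists>a. k < d \<longrightarrow> (\<forall>x. xs k x = (\<Sum>i\<in>{..<p k}. a i * E k i x))"
      proof (cases "k < d")
        case True
        obtain a where "\<forall>x\<in>UNIV. xs k x = (\<Sum>i\<in>{..<p k}. a i * E k i x)"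
          using xsrep[where xs=xs and k=k, OF True xs[rule_format, OF True]] by (elim exE)
        then show ?thesis by auto
      qed simp
    qed
    then obtain a where a: "\<forall>k<d. \<forall>x. xs k x = (\<Sum>i\<in>{..<p k}. a k i * E k i x)" by metis
    have "\<forall>ix\<in>tensor_idx (replicate d n). v ix = (\<Sum>\<iota>\<in>I. (\<Prod>k<d. a k (\<iota>!k)) * (\<Prod>k<d. E k (\<iota>!k) (ix!k)))"
    proof
      fix ix assume ix: "ix \<in> tensor_idx (replicate d n)"
      have "v ix = (\<Prod>k<d. xs k (ix!k))" using ix unfolding v outer_def by simp
      also have "\<dots> = (\<Prod>k<d. \<Sum>i<p k. a k i * E k i (ix!k))" using a by simp
      also have "\<dots> = (\<Sum>\<iota>\<in>I. \<Prod>k<d. a k (\<iota>!k) * E k (\<iota>!k) (ix!k))"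
        unfolding I_def by (rule sum_prod_tidx_map[symmetric])
      also have "\<dots> = (\<Sum>\<iota>\<in>I. (\<Prod>k<d. a k (\<iota>!k)) * (\<Prod>k<d. E k (\<iota>!k) (ix!k)))"
        by (simp add: prod.distrib)
      finally show "v ix = (\<Sum>\<iota>\<in>I. (\<Prod>k<d. a k (\<iota>!k)) * (\<Prod>k<d. E k (\<iota>!k) (ix!k)))" .
    qed
    then show ?thesis by (intro exI[where x="\<lambda>\<iota>. \<Prod>k<d. a k (\<iota>!k)"])
  qed
  have "\<exists>D. \<forall>ix\<in>tensor_idx (replicate d n). X ix = (\<Sum>\<iota>\<in>I. D \<iota> * (\<Prod>k<d. E k (\<iota>!k) (ix!k)))"
  proof (rule span_repr[OF _ _ X])
    show "finite I" by (simp add: I_def)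
    show "\<forall>v\<in>{outer n d xs | xs. \<forall>k<d. xs k \<in> U k}. \<exists>c. \<forall>ix\<in>tensor_idx (replicate d n).
        v ix = (\<Sum>\<iota>\<in>I. c \<iota> * (\<Prod>k<d. E k (\<iota>!k) (ix!k)))"
      using outer_rep by blast
  qed
  then show ?thesis using pr Ev Eo unfolding I_def by blast
qed

lemma concat_kdigits_mem:
  assumes n: "n \<ge> 1" and js: "js \<in> tensor_idx (replicate d' (n ^ \<kappa>))"
  shows "concat (map (kdigits n \<kappa>) js) \<in> tensor_idx (replicate (d' * \<kappa>) n)"
proof -
  have lj: "length js = d'" using js by (simp add: tidx_length)
  have len: "length (concat (map (kdigits n \<kappa>) js)) = d' * \<kappa>"
    using lj by (simp add: length_concat o_def sum_list_triv)
  have "concat (map (kdigits n \<kappa>) js) ! k < n" if k: "k < d' * \<kappa>" for k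
  proof -
    have kp: "\<kappa> > 0" using k by (cases \<kappa>) auto
    define g where "g = k div \<kappa>"
    define l where "l = k mod \<kappa>"
    have kk: "k = g * \<kappa> + l" unfolding g_def l_def by simp
    have g: "g < d'" using k kp unfolding g_def by (simp add: div_less_iff_less_mult)
    have l: "l < \<kappa>" using kp unfolding l_def by simp
    have "concat (map (kdigits n \<kappa>) js) ! k = map (kdigits n \<kappa>) js ! g ! l"
      unfolding kk by (rule concat_nth_blocks) (use g l lj in auto)
    then show ?thesis using g l lj kdigits_lt[OF n l] by simp
  qed
  then show ?thesis using len by (simp add: tensor_idx_def)
qed

lemma reshape_repr:
  assumes n: "n \<ge> 1" and kp: "\<kappa> \<ge> 1" and dd: "d = d' * \<kappa>"
    and X: "\<forall>ix\<in>tensor_idx (replicate d n). X ix = (\<Sum>\<iota>\<in>I. D \<iota> * (\<Prod>k<d. E k (\<iota>!k) (ix!k)))"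
  shows "\<forall>js\<in>tensor_idx (replicate d' (n ^ \<kappa>)). reshape n d \<kappa> X js
     = (\<Sum>\<iota>\<in>I. D \<iota> * (\<Prod>g<d'. kron n \<kappa> (\<lambda>l. E (g * \<kappa> + l) (\<iota>!(g * \<kappa> + l))) (js!g)))"
proof
  fix js assume js: "js \<in> tensor_idx (replicate d' (n ^ \<kappa>))"
  have ddiv: "d div \<kappa> = d'" using dd kp by simp
  define cis where "cis = concat (map (kdigits n \<kappa>) js)"
  have lj: "length js = d'" using js by (simp add: tidx_length)
  have jsg: "js ! g < n ^ \<kappa>" if "g < d'" for g using js that by (simp add: tensor_idx_def)
  have cmem: "cis \<in> tensor_idx (replicate d n)"
    unfolding cis_def dd by (rule concat_kdigits_mem[OF n js])
  have cnth: "cis ! (g * \<kappa> + l) = kdigits n \<kappa> (js!g) ! l" if "g < d'" "l < \<kappa>" for g l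
    unfolding cis_def by (subst concat_nth_blocks) (use that lj in auto)
  have "reshape n d \<kappa> X js = X cis" using js unfolding reshape_def ddiv cis_def by simp
  also have "\<dots> = (\<Sum>\<iota>\<in>I. D \<iota> * (\<Prod>k<d. E k (\<iota>!k) (cis!k)))" using X cmem by simp
  also have "\<dots> = (\<Sum>\<iota>\<in>I. D \<iota> * (\<Prod>g<d'. kron n \<kappa> (\<lambda>l. E (g * \<kappa> + l) (\<iota>!(g * \<kappa> + l))) (js!g)))"
  proof (rule sum.cong[OF refl])
    fix \<iota>
    have "(\<Prod>k<d. E k (\<iota>!k) (cis!k)) = (\<Prod>g<d'. \<Prod>l<\<kappa>. E (g * \<kappa> + l) (\<iota>!(g * \<kappa> + l)) (cis!(g * \<kappa> + l)))"
      unfolding dd by (rule prod_group)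
    also have "\<dots> = (\<Prod>g<d'. kron n \<kappa> (\<lambda>l. E (g * \<kappa> + l) (\<iota>!(g * \<kappa> + l))) (js!g))"
      by (rule prod.cong[OF refl]) (auto simp: kron_def jsg cnth intro!: prod.cong)
    finally show "D \<iota> * (\<Prod>k<d. E k (\<iota>!k) (cis!k)) = D \<iota> * (\<Prod>g<d'. kron n \<kappa> (\<lambda>l. E (g * \<kappa> + l) (\<iota>!(g * \<kappa> + l))) (js!g))"
      by simp
  qed
  finally show "reshape n d \<kappa> X js
     = (\<Sum>\<iota>\<in>I. D \<iota> * (\<Prod>g<d'. kron n \<kappa> (\<lambda>l. E (g * \<kappa> + l) (\<iota>!(g * \<kappa> + l))) (js!g)))" .
qed

lemma fro_reshape:
  assumes n: "n \<ge> 1" and kp: "\<kappa> \<ge> 1" and dd: "d = d' * \<kappa>"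
  shows "fro_sq (replicate d' (n ^ \<kappa>)) (reshape n d \<kappa> X) = fro_sq (replicate d n) X"
proof -
  have ddiv: "d div \<kappa> = d'" using dd kp by simp
  have "fro_sq (replicate d' (n ^ \<kappa>)) (reshape n d \<kappa> X)
      = (\<Sum>js\<in>tensor_idx (replicate d' (n ^ \<kappa>)). (X (concat (map (kdigits n \<kappa>) js)))\<^sup>2)"
    unfolding fro_sq_def reshape_def ddiv by simp
  also have "\<dots> = (\<Sum>ix\<in>tensor_idx (replicate (d' * \<kappa>) n). (X ix)\<^sup>2)"
    by (rule sum_reshape[OF n])
  finally show ?thesis unfolding fro_sq_def dd .
qed



theorem theorem1:
  fixes d n \<kappa> r m :: nat and \<epsilon> \<delta> :: real
    and As :: "nat \<Rightarrow> nat \<Rightarrow> nat \<Rightarrow> real"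
  assumes "d \<ge> 1" and "n \<ge> 1" and "\<kappa> \<ge> 1" and "\<kappa> dvd d" and "r \<ge> 2"
    and "\<forall>i < d div \<kappa>. RIP m (n ^ \<kappa>) (As i) \<epsilon> (S12 n \<kappa>)"
    and "\<delta> = 4 * real (d div \<kappa>) * real r ^ d * \<epsilon>"
    and "\<delta> < 1"
  shows "\<forall>X. hosvd_rank_le n d r X \<longrightarrow>
           (1 - \<delta>) * fro_sq (replicate d n) X
             \<le> fro_sq (replicate (d div \<kappa>) m) (multi_mode (d div \<kappa>) m (n ^ \<kappa>) As (reshape n d \<kappa> X)) \<and>
           fro_sq (replicate (d div \<kappa>) m) (multi_mode (d div \<kappa>) m (n ^ \<kappa>) As (reshape n d \<kappa> X))
             \<le> (1 + \<delta>) * fro_sq (replicate d n) X"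
proof (intro allI impI)
  fix X assume hr: "hosvd_rank_le n d r X"
  note n1 = assms(2) and k1 = assms(3) and RIPs = assms(6)
  define d' where "d' = d div \<kappa>"
  define N where "N = n ^ \<kappa>"
  have dd: "d = d' * \<kappa>" using assms(4) by (simp add: d'_def)
  have d'1: "d' \<ge> 1" using assms(1) dd by (cases d') auto
  have RIP: "\<And>i. i < d' \<Longrightarrow> RIP m N (As i) \<epsilon> (S12 n \<kappa>)" using RIPs unfolding d'_def N_def by simp
  obtain p E D where pr: "\<forall>k<d. p k \<le> r" and Ev: "\<forall>k<d. \<forall>i<p k. is_vec n (E k i)"
    and Eo: "\<forall>k<d. \<forall>i<p k. \<forall>i'<p k. vec_inner n (E k i) (E k i') = (if i = i' then 1 else 0)"
    and Xr: "\<forall>ix\<in>tensor_idx (replicate d n). X ix = (\<Sum>\<iota>\<in>tensor_idx (map p [0..<d]). D \<iota> * (\<Prod>k<d. E k (\<iota>!k) (ix!k)))"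
    using X_repr[OF hr] by blast
  define I where "I = tensor_idx (map p [0..<d])"
  have fI: "finite I" by (simp add: I_def)
  have Ilen: "\<And>\<iota>. \<iota> \<in> I \<Longrightarrow> length \<iota> = d" by (simp add: I_def tidx_length)
  have Ilt: "\<And>\<iota> k. \<iota> \<in> I \<Longrightarrow> k < d \<Longrightarrow> \<iota> ! k < p k" by (simp add: I_def tensor_idx_def)
  define W where "W = (\<lambda>g \<iota>. kron n \<kappa> (\<lambda>l. E (g * \<kappa> + l) (\<iota>!(g * \<kappa> + l))))"
  have R0: "\<forall>js\<in>tensor_idx (replicate d' N). reshape n d \<kappa> X js = (\<Sum>\<iota>\<in>I. D \<iota> * (\<Prod>g<d'. W g \<iota> (js!g)))"
    using reshape_repr[OF n1 k1 dd, where X=X and I=I and D=D and E=E] Xr unfolding I_def W_def N_def by simp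
  define F0 where "F0 = fro_sq (replicate d n) X"
  have F0': "fro_sq (replicate d' N) (reshape n d \<kappa> X) = F0"
    unfolding F0_def N_def by (rule fro_reshape[OF n1 k1 dd])
  have F0pos: "F0 \<ge> 0" unfolding F0_def fro_sq_def by (simp add: sum_nonneg)
  have eps0: "\<epsilon> \<ge> 0"
  proof -
    define e0 where "e0 = (\<lambda>l::nat. \<lambda>i::nat. if i = 0 then (1::real) else 0)"
    have e0v: "is_vec n (e0 l)" for l using n1 unfolding e0_def is_vec_def by auto
    have e0n: "vec_norm_sq n (e0 l) = 1" for l
    proof -
      have "vec_norm_sq n (e0 l) = (\<Sum>i<n. if i = 0 then 1 else 0)"
        unfolding vec_norm_sq_def e0_def by (intro sum.cong) auto
      also have "\<dots> = 1" using n1 by (simp add: sum.delta)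
      finally show ?thesis .
    qed
    have xS: "kron n \<kappa> e0 \<in> S1 n \<kappa>" unfolding S1_def using e0v e0n by blast
    have xn: "vec_norm_sq N (kron n \<kappa> e0) = 1"
      unfolding N_def vec_norm_sq_inner kron_inner[OF n1] using e0n by (simp add: vec_norm_sq_inner)
    have "\<bar>vec_norm_sq m (mat_vec m N (As 0) (kron n \<kappa> e0)) - 1\<bar> \<le> \<epsilon>"
      by (rule rip_diag[OF RIP xS xn]) (use d'1 in simp)
    then show ?thesis by simp
  qed
  define a where "a = 2 * \<epsilon> * real r ^ \<kappa>"
  have a0: "a \<ge> 0" unfolding a_def using eps0 by simp
  have rk: "real r ^ \<kappa> \<le> real r ^ d"
    using assms(5) dd d'1 by (intro power_increasing) (auto intro: order_trans[of _ "1 * \<kappa>"])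
  have d'a: "2 * real d' * a \<le> \<delta>"
  proof -
    have "2 * real d' * a = 4 * real d' * real r ^ \<kappa> * \<epsilon>" unfolding a_def by simp
    also have "\<dots> \<le> 4 * real d' * real r ^ d * \<epsilon>"
      using rk eps0 by (intro mult_right_mono mult_left_mono) auto
    finally show ?thesis using assms(7) unfolding d'_def by simp
  qed
  have d'a2: "real d' * a \<le> 1/2" using d'a assms(8) by simp
  have a1: "a \<le> 1"
  proof -
    have "a \<le> real d' * a" using d'1 a0 by (simp add: mult_le_cancel_right1)
    then show ?thesis using d'a2 by simp
  qed
  define dims where "dims = (\<lambda>j. replicate j m @ replicate (d' - j) N)"
  define V where "V = (\<lambda>j g \<iota>. if g < j then mat_vec m N (As g) (W g \<iota>) else W g \<iota>)"
  define Y where "Y = (\<lambda>j. fold (\<lambda>j Z. mode_prod (replicate j m @ replicate (d' - j) N) j m (As j) Z) [0..<j] (reshape n d \<kappa> X))"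
  have iter: "Y j = (\<lambda>js. if js \<in> tensor_idx (dims j) then \<Sum>\<iota>\<in>I. D \<iota> * (\<Prod>g<d'. V j g \<iota> (js!g)) else 0)
       \<and> (1 - a) ^ j * F0 \<le> fro_sq (dims j) (Y j) \<and> fro_sq (dims j) (Y j) \<le> (1 + a) ^ j * F0"
    if "j \<le> d'" for j
    using that
  proof (induction j)
    case 0
    have Y0: "Y 0 = reshape n d \<kappa> X" unfolding Y_def by simp
    have d0: "dims 0 = replicate d' N" unfolding dims_def by simp
    have "Y 0 = (\<lambda>js. if js \<in> tensor_idx (dims 0) then \<Sum>\<iota>\<in>I. D \<iota> * (\<Prod>g<d'. V 0 g \<iota> (js!g)) else 0)"
    proof
      fix js show "Y 0 js = (if js \<in> tensor_idx (dims 0) then \<Sum>\<iota>\<in>I. D \<iota> * (\<Prod>g<d'. V 0 g \<iota> (js!g)) else 0)"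
        using R0 unfolding Y0 d0 V_def by (simp add: reshape_def d'_def[symmetric] N_def[symmetric])
    qed
    then show ?case using F0' unfolding Y0 d0 by simp
  next
    case (Suc j)
    then have j: "j < d'" by simp
    from Suc have IH: "Y j = (\<lambda>js. if js \<in> tensor_idx (dims j) then \<Sum>\<iota>\<in>I. D \<iota> * (\<Prod>g<d'. V j g \<iota> (js!g)) else 0)"
      and lo: "(1 - a) ^ j * F0 \<le> fro_sq (dims j) (Y j)" and up: "fro_sq (dims j) (Y j) \<le> (1 + a) ^ j * F0"
      by auto
    define h where "h = (\<lambda>\<iota>::nat list. take \<kappa> (drop (j * \<kappa>) \<iota>))"
    define w where "w = (\<lambda>t. kron n \<kappa> (\<lambda>l. E (j * \<kappa> + l) (t!l)))"
    define T where "T = h ` I"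
    define Z where "Z = (\<lambda>\<iota> js. \<Prod>g\<in>{..<d'} - {j}. V j g \<iota> ((js::nat list)!g))"
    have fT: "finite T" unfolding T_def using fI by simp
    have jk: "j * \<kappa> + \<kappa> \<le> d" using j unfolding dd
      by (metis add.commute mult_Suc mult_le_mono1 Suc_leI)
    have hlen: "length (h \<iota>) = \<kappa>" if "\<iota> \<in> I" for \<iota>
      using Ilen[OF that] jk unfolding h_def by simp
    have hnth: "h \<iota> ! l = \<iota> ! (j * \<kappa> + l)" if "\<iota> \<in> I" "l < \<kappa>" for \<iota> l
      using Ilen[OF that(1)] jk that(2) unfolding h_def by simp
    have Vjj: "V j j \<iota> = w (h \<iota>)" if "\<iota> \<in> I" for \<iota>
      unfolding V_def W_def w_def by (simp, rule kron_cong, simp add: hnth[OF that])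
    have Tl: "length t = \<kappa> \<and> (\<forall>l<\<kappa>. t ! l < p (j * \<kappa> + l))" if tT: "t \<in> T" for t
    proof -
      obtain \<iota> where \<iota>: "\<iota> \<in> I" and t: "t = h \<iota>" using tT unfolding T_def by blast
      have "\<forall>l<\<kappa>. t ! l < p (j * \<kappa> + l)"
        using hnth[OF \<iota>] Ilt[OF \<iota>] jk unfolding t by auto
      then show ?thesis using hlen[OF \<iota>] t by simp
    qed
    have wS: "w t \<in> S1 n \<kappa>" if "t \<in> T" for t
      unfolding S1_def w_def using Tl[OF that] Ev Eo jk
      by (auto simp: vec_norm_sq_inner intro!: exI[where x="\<lambda>l. E (j * \<kappa> + l) (t!l)"])
    have orth: "\<forall>t\<in>T. \<forall>s\<in>T. vec_inner N (w t) (w s) = (if t = s then 1 else 0)"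
    proof (intro ballI)
      fix t s assume t: "t \<in> T" and s: "s \<in> T"
      have "vec_inner N (w t) (w s) = (\<Prod>l<\<kappa>. vec_inner n (E (j * \<kappa> + l) (t!l)) (E (j * \<kappa> + l) (s!l)))"
        unfolding w_def N_def by (rule kron_inner[OF n1])
      also have "\<dots> = (\<Prod>l<\<kappa>. if t!l = s!l then 1 else 0)"
        using Tl[OF t] Tl[OF s] Eo jk by (intro prod.cong refl) auto
      also have "\<dots> = (if \<forall>l<\<kappa>. t!l = s!l then 1 else 0)" by (rule prod_indicator)
      also have "(\<forall>l<\<kappa>. t!l = s!l) = (t = s)"
        using Tl[OF t] Tl[OF s] by (auto intro: nth_equalityI)
      finally show "vec_inner N (w t) (w s) = (if t = s then 1 else 0)" .
    qed
    have wn: "vec_norm_sq N (w t) = 1" if "t \<in> T" for t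
      using orth that by (simp add: vec_norm_sq_inner)
    have gram: "\<forall>t\<in>T. \<forall>s\<in>T. \<bar>vec_inner m (mat_vec m N (As j) (w t)) (mat_vec m N (As j) (w s)) - vec_inner N (w t) (w s)\<bar> \<le> 2 * \<epsilon>"
    proof (intro ballI)
      fix t s assume t: "t \<in> T" and s: "s \<in> T"
      show "\<bar>vec_inner m (mat_vec m N (As j) (w t)) (mat_vec m N (As j) (w s)) - vec_inner N (w t) (w s)\<bar> \<le> 2 * \<epsilon>"
      proof (cases "t = s")
        case True
        have "\<bar>vec_norm_sq m (mat_vec m N (As j) (w t)) - 1\<bar> \<le> \<epsilon>"
          by (rule rip_diag[OF RIP[OF j] wS[OF t] wn[OF t]])
        then show ?thesis using True orth t eps0 by (simp add: vec_norm_sq_inner)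
      next
        case False
        have "\<bar>vec_inner m (mat_vec m N (As j) (w t)) (mat_vec m N (As j) (w s))\<bar> \<le> 2 * \<epsilon>"
          by (rule rip_off[OF RIP[OF j] N_def wS[OF t] wn[OF t] wS[OF s] wn[OF s]]) (use orth t s False in simp)
        then show ?thesis using False orth t s by simp
      qed
    qed
    have cardT: "card T \<le> r ^ \<kappa>"
    proof -
      have "T \<subseteq> tensor_idx (replicate \<kappa> r)"
      proof
        fix t assume t: "t \<in> T"
        have "\<forall>l<\<kappa>. t ! l < r"
        proof (intro allI impI)
          fix l assume l: "l < \<kappa>"
          have "t ! l < p (j * \<kappa> + l)" using Tl[OF t] l by simp
          also have "\<dots> \<le> r" using pr jk l by simp
          finally show "t ! l < r" .
        qed
        then show "t \<in> tensor_idx (replicate \<kappa> r)" using Tl[OF t] by (simp add: tensor_idx_def)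
      qed
      then have "card T \<le> card (tensor_idx (replicate \<kappa> r))" by (intro card_mono) simp_all
      then show ?thesis by (simp add: card_tidx)
    qed
    have dl: "j < length (dims j)" and dN: "dims j ! j = N" and dup: "(dims j)[j := m] = dims (Suc j)"
    proof -
      obtain q where q: "d' - j = Suc q" using j by (metis Suc_diff_Suc)
      have q2: "d' - Suc j = q" using q by simp
      show "j < length (dims j)" using j unfolding dims_def by simp
      show "dims j ! j = N" unfolding dims_def q by (simp add: nth_append)
      have rs: "replicate (Suc j) m = replicate j m @ [m]" by (simp add: replicate_append_same)
      show "(dims j)[j := m] = dims (Suc j)" unfolding dims_def q q2 rs
        by (simp add: list_update_append)
    qed
    have inv: "\<forall>\<iota>\<in>I. \<forall>ix i. Z \<iota> (ix[j:=i]) = Z \<iota> ix"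
      unfolding Z_def by (auto intro!: prod.cong)
    have splitj: "(\<Prod>g<d'. F g) = F j * (\<Prod>g\<in>{..<d'} - {j}. F g)" for F :: "nat \<Rightarrow> real"
      using j by (subst prod.remove[of "{..<d'}" j]) auto
    have Yf: "Y j = (\<lambda>ix. if ix \<in> tensor_idx (dims j) then \<Sum>\<iota>\<in>I. D \<iota> * w (h \<iota>) (ix!j) * Z \<iota> ix else 0)"
      unfolding IH Z_def
      by (intro ext if_cong refl sum.cong) (simp add: splitj Vjj mult.assoc)
    have YS: "Y (Suc j) = mode_prod (dims j) j m (As j) (Y j)"
      unfolding Y_def dims_def by simp
    have form: "Y (Suc j) = (\<lambda>ix. if ix \<in> tensor_idx (dims (Suc j)) then \<Sum>\<iota>\<in>I. D \<iota> * (\<Prod>g<d'. V (Suc j) g \<iota> (ix!g)) else 0)"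
    proof -
      have "Y (Suc j) = (\<lambda>ix. if ix \<in> tensor_idx (dims (Suc j))
            then \<Sum>\<iota>\<in>I. D \<iota> * mat_vec m N (As j) (w (h \<iota>)) (ix!j) * Z \<iota> ix else 0)"
        unfolding YS step_form[where D=D and w=w and h=h, OF dl dN inv Yf] dup ..
      also have "\<dots> = (\<lambda>ix. if ix \<in> tensor_idx (dims (Suc j)) then \<Sum>\<iota>\<in>I. D \<iota> * (\<Prod>g<d'. V (Suc j) g \<iota> (ix!g)) else 0)"
      proof (intro ext if_cong refl sum.cong)
        fix ix \<iota> assume \<iota>: "\<iota> \<in> I"
        have "V (Suc j) j \<iota> = mat_vec m N (As j) (w (h \<iota>))"
          using Vjj[OF \<iota>] unfolding V_def by simp
        moreover have "(\<Prod>g\<in>{..<d'} - {j}. V (Suc j) g \<iota> (ix!g)) = Z \<iota> ix"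
          unfolding Z_def V_def by (intro prod.cong refl) auto
        ultimately show "D \<iota> * mat_vec m N (As j) (w (h \<iota>)) (ix!j) * Z \<iota> ix = D \<iota> * (\<Prod>g<d'. V (Suc j) g \<iota> (ix!g))"
          by (simp add: splitj mult.assoc)
      qed
      finally show ?thesis .
    qed
    have bnd: "\<bar>fro_sq (dims (Suc j)) (Y (Suc j)) - fro_sq (dims j) (Y j)\<bar> \<le> 2 * \<epsilon> * card T * fro_sq (dims j) (Y j)"
      using step_bound[OF dl dN fI fT _ orth gram inv Yf] unfolding YS dup T_def by simp
    have fj0: "fro_sq (dims j) (Y j) \<ge> 0" unfolding fro_sq_def by (simp add: sum_nonneg)
    have "2 * \<epsilon> * card T * fro_sq (dims j) (Y j) \<le> a * fro_sq (dims j) (Y j)"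
    proof (rule mult_right_mono[OF _ fj0])
      have "real (card T) \<le> real r ^ \<kappa>" using cardT by (metis of_nat_le_iff of_nat_power)
      then show "2 * \<epsilon> * card T \<le> a" unfolding a_def using eps0 by (simp add: mult_left_mono)
    qed
    with bnd have b2: "\<bar>fro_sq (dims (Suc j)) (Y (Suc j)) - fro_sq (dims j) (Y j)\<bar> \<le> a * fro_sq (dims j) (Y j)"
      by linarith
    have "(1 - a) ^ Suc j * F0 = (1 - a) * ((1 - a) ^ j * F0)" by simp
    also have "\<dots> \<le> (1 - a) * fro_sq (dims j) (Y j)" using lo a1 by (intro mult_left_mono) auto
    also have "\<dots> \<le> fro_sq (dims (Suc j)) (Y (Suc j))" using b2 by (simp add: algebra_simps abs_le_iff)
    finally have lo': "(1 - a) ^ Suc j * F0 \<le> fro_sq (dims (Suc j)) (Y (Suc j))" .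
    have "fro_sq (dims (Suc j)) (Y (Suc j)) \<le> (1 + a) * fro_sq (dims j) (Y j)"
      using b2 by (simp add: algebra_simps abs_le_iff)
    also have "\<dots> \<le> (1 + a) * ((1 + a) ^ j * F0)" using up a0 by (intro mult_left_mono) auto
    also have "\<dots> = (1 + a) ^ Suc j * F0" by simp
    finally have up': "fro_sq (dims (Suc j)) (Y (Suc j)) \<le> (1 + a) ^ Suc j * F0" .
    show ?case using form lo' up' by simp
  qed
  show "(1 - \<delta>) * fro_sq (replicate d n) X
             \<le> fro_sq (replicate (d div \<kappa>) m) (multi_mode (d div \<kappa>) m (n ^ \<kappa>) As (reshape n d \<kappa> X)) \<and>
           fro_sq (replicate (d div \<kappa>) m) (multi_mode (d div \<kappa>) m (n ^ \<kappa>) As (reshape n d \<kappa> X))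
             \<le> (1 + \<delta>) * fro_sq (replicate d n) X"
  proof -
    have MM: "multi_mode (d div \<kappa>) m (n ^ \<kappa>) As (reshape n d \<kappa> X) = Y d'"
      unfolding multi_mode_def Y_def d'_def N_def ..
    have dd': "replicate (d div \<kappa>) m = dims d'" unfolding dims_def d'_def by simp
    have it: "(1 - a) ^ d' * F0 \<le> fro_sq (dims d') (Y d') \<and> fro_sq (dims d') (Y d') \<le> (1 + a) ^ d' * F0"
      using iter[of d'] by blast
    have "(1 - \<delta>) * F0 \<le> (1 - a) ^ d' * F0"
    proof (rule mult_right_mono[OF _ F0pos])
      have "1 - \<delta> \<le> 1 - real d' * a" using d'a a0 mult_nonneg_nonneg[of "real d'" a] by linarith
      also have "\<dots> \<le> (1 - a) ^ d'" by (rule pow_lower[OF a1])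
      finally show "1 - \<delta> \<le> (1 - a) ^ d'" .
    qed
    moreover have "(1 + a) ^ d' * F0 \<le> (1 + \<delta>) * F0"
    proof (rule mult_right_mono[OF _ F0pos])
      have "(1 + a) ^ d' \<le> 1 + 2 * real d' * a" by (rule pow_upper[OF a0 d'a2])
      also have "\<dots> \<le> 1 + \<delta>" using d'a by simp
      finally show "(1 + a) ^ d' \<le> 1 + \<delta>" .
    qed
    ultimately show ?thesis using it unfolding MM dd' F0_def by linarith
  qed
qed


end
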